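(* Let $V\ge3$, $I_1<I_2<I_3$, and suppose $x_2=I_2-I_1$ and $x_3=I_3-I_1$ are incommensurable ($x_2/x_3\notin\mathbb{Q}$). Let $\rho$ be a continuous, strictly positive probability density on $\mathbb{R}_+$ such that the system $(\rho_1,\rho_2,\rho_3)=(\rho,\rho,\rho)$ is admissible. Then there is $\beta>0$ with $\rho(T)=\beta e^{-\beta T}$ for all $T\ge0$.
   Context: For $I_v<I_w$, a pair of densities $(\rho_v,\rho_w)$ on $\mathbb{R}_+$ with corresponding random variables $\xi_v,\xi_w$ is admissible if the conditional density of $\xi_v-(I_w-I_v)$ given $\{\xi_v>I_w-I_v\}$ equals $\rho_w$. A system $(\rho_1,\dots,\rho_V)$ is admissible if each consecutive pair $(\rho_v,\rho_{v+1})$ is admissible. *)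

theory Defs
  imports "HOL-Analysis.Analysis"
begin

definition prob_density_Rplus :: "(real \<Rightarrow> real) \<Rightarrow> bool" where
  "prob_density_Rplus \<rho> \<longleftrightarrow> (\<forall>t\<ge>0. 0 \<le> \<rho> t) \<and> (\<rho> has_integral 1) {0..}"

definition tail_prob :: "(real \<Rightarrow> real) \<Rightarrow> real \<Rightarrow> real" where
  "tail_prob \<rho> a = integral {a<..} \<rho>"

text \<open>Admissible pair: for I_v < I_w, the conditional density of xi_v - (I_w - I_v) given
  xi_v > I_w - I_v, namely t \<mapsto> rho_v (t + (I_w - I_v)) / P(xi_v > I_w - I_v) on t \<ge> 0,
  equals rho_w (as densities, i.e. almost everywhere on [0,oo)).\<close>
definition admissible_pair ::
  "real \<Rightarrow> real \<Rightarrow> (real \<Rightarrow> real) \<Rightarrow> (real \<Rightarrow> real) \<Rightarrow> bool" where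
  "admissible_pair Iv Iw \<rho>v \<rho>w \<longleftrightarrow>
     Iv < Iw \<and> prob_density_Rplus \<rho>v \<and> prob_density_Rplus \<rho>w \<and>
     0 < tail_prob \<rho>v (Iw - Iv) \<and>
     (AE t in lborel. 0 \<le> t \<longrightarrow>
        \<rho>w t = \<rho>v (t + (Iw - Iv)) / tail_prob \<rho>v (Iw - Iv))"

definition admissible_system ::
  "nat \<Rightarrow> (nat \<Rightarrow> real) \<Rightarrow> (nat \<Rightarrow> real \<Rightarrow> real) \<Rightarrow> bool" where
  "admissible_system V I \<rho>s \<longleftrightarrow>
     (\<forall>v. 1 \<le> v \<and> v < V \<longrightarrow> admissible_pair (I v) (I (Suc v)) (\<rho>s v) (\<rho>s (Suc v)))"

end

theory Submission
  imports Defs "HOL-Analysis.Kronecker_Approximation_Theorem"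
begin


lemma ae_to_all:
  fixes f g :: "real \<Rightarrow> real"
  assumes cf: "continuous_on {0..} f" and cg: "continuous_on {0..} g"
    and ae: "AE t in lborel. 0 \<le> t \<longrightarrow> f t = g t"
  shows "\<forall>t\<ge>0. f t = g t"
proof -
  have pos: "f t = g t" if "t > 0" for t
  proof (rule ccontr)
    assume ne: "f t \<noteq> g t"
    have c: "continuous_on {0<..} (\<lambda>x. f x - g x)"
      by (intro continuous_intros continuous_on_subset[OF cf] continuous_on_subset[OF cg]) auto
    have "open ({0<..} \<inter> (\<lambda>x. f x - g x) -` (-{0}))"
      by (rule continuous_open_preimage[OF c]) auto
    moreover have "t \<in> {0<..} \<inter> (\<lambda>x. f x - g x) -` (-{0})" using that ne by auto
    ultimately obtain e where e: "e > 0" "ball t e \<subseteq> {0<..} \<inter> (\<lambda>x. f x - g x) -` (-{0})"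
      by (meson open_contains_ball)
    from ae obtain N where N: "{x \<in> space lborel. \<not> (0 \<le> x \<longrightarrow> f x = g x)} \<subseteq> N" "emeasure lborel N = 0" "N \<in> sets lborel"
      by (rule AE_E)
    have sub: "{t-e<..<t+e} \<subseteq> N"
    proof
      fix x assume "x \<in> {t-e<..<t+e}"
      then have "x \<in> ball t e" by (auto simp: dist_real_def)
      then have "x > 0" "f x \<noteq> g x" using e by auto
      then show "x \<in> N" using N(1) by auto
    qed
    have "emeasure lborel {t-e<..<t+e} \<le> emeasure lborel N"
      by (rule emeasure_mono[OF sub N(3)])
    then show False using N(2) e by simp
  qed
  have zero: "f 0 = g 0"
  proof -
    have c0: "continuous (at_right 0) (\<lambda>x. f x - g x)"
    proof -
      have "continuous_on {0..} (\<lambda>x. f x - g x)" by (intro continuous_intros cf cg)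
      then have "continuous (at 0 within {0..}) (\<lambda>x. f x - g x)"
        using continuous_on_eq_continuous_within by auto
      then show ?thesis
        by (rule continuous_within_subset) auto
    qed
    have "((\<lambda>x. f x - g x) \<longlongrightarrow> f 0 - g 0) (at_right 0)"
      using c0 by (simp add: continuous_within)
    moreover have "eventually (\<lambda>x. f x - g x = (\<lambda>x. 0) x) (at_right (0::real))"
      using eventually_at_right_less[of "0::real"] by (rule eventually_mono) (simp add: pos)
    ultimately have "((\<lambda>x. 0) \<longlongrightarrow> f 0 - g 0) (at_right (0::real))"
      by (rule Lim_transform_eventually)
    then have "f 0 - g 0 = 0"
      using tendsto_const tendsto_unique trivial_limit_at_right_real by blast
    then show ?thesis by simp
  qed
  show ?thesis using pos zero by (metis less_eq_real_def)
qed



lemma shift_iter: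
  fixes f :: "real \<Rightarrow> real"
  assumes "b \<ge> 0" "\<forall>t\<ge>0. f (t + b) = r * f t" "t \<ge> 0"
  shows "f (t + real n * b) = r ^ n * f t"
proof (induction n)
  case 0 then show ?case by simp
next
  case (Suc n)
  have "f (t + real (Suc n) * b) = f ((t + real n * b) + b)" by (simp add: algebra_simps)
  also have "\<dots> = r * f (t + real n * b)" using assms by simp
  finally show ?case using Suc by simp
qed

lemma periodic_reduce:
  fixes f :: "real \<Rightarrow> real"
  assumes "a > 0" "\<forall>t\<ge>0. f (t + a) = f t" "x \<ge> 0"
  shows "f x = f (frac (x/a) * a)"
proof -
  have it: "f (y + real n * a) = f y" if "y \<ge> 0" for y n
    using shift_iter[of a f 1 y n] assms that by simp
  have fl: "\<lfloor>x/a\<rfloor> \<ge> 0" using assms by simp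
  have "x = frac (x/a) * a + real (nat \<lfloor>x/a\<rfloor>) * a"
    using fl assms by (simp add: frac_def algebra_simps)
  moreover have "frac (x/a) * a \<ge> 0" using assms by (simp add: frac_ge_0)
  ultimately show ?thesis using it by metis
qed


theorem theorem6:
  fixes V :: nat and I :: "nat \<Rightarrow> real" and \<rho> :: "real \<Rightarrow> real"
  assumes "V \<ge> 3"
    and "I 1 < I 2" and "I 2 < I 3"
    and "(I 2 - I 1) / (I 3 - I 1) \<notin> \<rat>"
    and "continuous_on {0..} \<rho>"
    and "\<forall>t\<ge>0. 0 < \<rho> t"
    and "prob_density_Rplus \<rho>"
    and "admissible_system 3 I (\<lambda>_. \<rho>)"
  shows "\<exists>\<beta>>0. \<forall>T\<ge>0. \<rho> T = \<beta> * exp (- \<beta> * T)"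
proof -
  define a where "a = I 2 - I 1"
  define b where "b = I 3 - I 2"
  have a0: "a > 0" and b0: "b > 0" using assms(2,3) by (auto simp: a_def b_def)
  have cr: "continuous_on {0..} \<rho>" by (rule assms(5))
  have h8: "\<forall>v. 1 \<le> v \<and> v < 3 \<longrightarrow> admissible_pair (I v) (I (Suc v)) \<rho> \<rho>"
    using assms(8) unfolding admissible_system_def by auto
  have "admissible_pair (I 1) (I (Suc 1)) \<rho> \<rho>" using h8[rule_format, of 1] by simp
  then have adm1: "admissible_pair (I 1) (I 2) \<rho> \<rho>" by (simp add: numeral_2_eq_2)
  have "admissible_pair (I 2) (I (Suc 2)) \<rho> \<rho>" using h8[rule_format, of 2] by simp
  then have adm2: "admissible_pair (I 2) (I 3) \<rho> \<rho>" by (simp add: eval_nat_numeral)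
  have shift: "\<exists>p>0. \<forall>t\<ge>0. \<rho> (t + c) = p * \<rho> t"
    if adm: "admissible_pair u w \<rho> \<rho>" and c: "c = w - u" for u w c
  proof -
    define p where "p = tail_prob \<rho> c"
    have p0: "p > 0" and ae: "AE t in lborel. 0 \<le> t \<longrightarrow> \<rho> t = \<rho> (t + c) / p"
      and uw: "u < w"
      using adm unfolding admissible_pair_def p_def c by auto
    have "continuous_on {0..} (\<lambda>t. \<rho> (t + c))"
      by (rule continuous_on_compose2[OF cr]) (use uw c in \<open>auto intro!: continuous_intros\<close>)
    then have "continuous_on {0..} (\<lambda>t. \<rho> (t + c) / p)"
      using p0 by (intro continuous_intros) auto
    from ae_to_all[OF cr this ae] have "\<forall>t\<ge>0. \<rho> t = \<rho> (t + c) / p" .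
    then have "\<forall>t\<ge>0. \<rho> (t + c) = p * \<rho> t" using p0 by (auto simp: field_simps)
    then show ?thesis using p0 by blast
  qed
  obtain p where p0: "p > 0" and pa: "\<forall>t\<ge>0. \<rho> (t + a) = p * \<rho> t"
    using shift[OF adm1] a_def by auto
  obtain q where q0: "q > 0" and qb: "\<forall>t\<ge>0. \<rho> (t + b) = q * \<rho> t"
    using shift[OF adm2] b_def by auto
  define lam where "lam = - ln p / a"
  define f where "f t = \<rho> t * exp (lam * t)" for t
  define r where "r = q * exp (lam * b)"
  have ela: "exp (lam * a) = 1 / p" using a0 p0
    by (simp add: lam_def exp_minus inverse_eq_divide)
  have fa: "\<forall>t\<ge>0. f (t + a) = f t"
  proof (intro allI impI)
    fix t :: real assume "t \<ge> 0"
    then have "f (t + a) = p * \<rho> t * (exp (lam * t) * exp (lam * a))"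
      using pa by (simp add: f_def distrib_left exp_add)
    also have "\<dots> = f t" using ela p0 by (simp add: f_def)
    finally show "f (t + a) = f t" .
  qed
  have fb: "\<forall>t\<ge>0. f (t + b) = r * f t"
  proof (intro allI impI)
    fix t :: real assume "t \<ge> 0"
    then show "f (t + b) = r * f t"
      using qb by (simp add: f_def r_def distrib_left exp_add)
  qed
  have fc: "continuous_on {0..} f"
    unfolding f_def by (intro continuous_intros cr)
  have fpos: "f t > 0" if "t \<ge> 0" for t using assms(6) that by (simp add: f_def)
  have red: "f t = f (frac (t/a) * a)" if "t \<ge> 0" for t
    by (rule periodic_reduce[OF a0 fa that])
  have fr_in: "frac (t/a) * a \<in> {0..a}" for t
    using a0 by (auto simp: frac_ge_0 less_imp_le[OF frac_lt_1])
  have cfa: "continuous_on {0..a} f" by (rule continuous_on_subset[OF fc]) auto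
  obtain xm where xm: "xm \<in> {0..a}" "\<forall>y\<in>{0..a}. f xm \<le> f y"
    using continuous_attains_inf[OF compact_Icc _ cfa] a0 by auto
  obtain xM where xM: "xM \<in> {0..a}" "\<forall>y\<in>{0..a}. f y \<le> f xM"
    using continuous_attains_sup[OF compact_Icc _ cfa] a0 by auto
  define m where "m = f xm"
  define M where "M = f xM"
  have m0: "m > 0" using fpos xm by (auto simp: m_def)
  have bnd: "m \<le> f t \<and> f t \<le> M" if "t \<ge> 0" for t
    using red[OF that] fr_in[of t] xm xM by (auto simp: m_def M_def)
  have f0: "f 0 > 0" using fpos by simp
  have rn: "f (real n * b) = r ^ n * f 0" for n
    using shift_iter[of b f r 0 n] b0 fb by simp
  have r0: "r > 0" using q0 by (simp add: r_def)
  have r1: "r = 1"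
  proof (rule ccontr)
    assume "r \<noteq> 1"
    then consider "r > 1" | "r < 1" by linarith
    then show False
    proof cases
      case 1
      obtain n where "M / f 0 < r ^ n" using real_arch_pow[OF 1] by blast
      then have "M < r ^ n * f 0" using f0 by (simp add: field_simps)
      moreover have "f (real n * b) \<le> M" using bnd[of "real n * b"] b0 by auto
      ultimately show False using rn[of n] by simp
    next
      case 2
      obtain n where "r ^ n < m / f 0" using real_arch_pow_inv[of "m / f 0" r] 2 m0 f0 by auto
      then have "r ^ n * f 0 < m" using f0 by (simp add: field_simps)
      moreover have "m \<le> f (real n * b)" using bnd[of "real n * b"] b0 by auto
      ultimately show False using rn[of n] by simp
    qed
  qed
  define \<theta> where "\<theta> = b / a"
  have th: "\<theta> \<notin> \<rat>"
  proof
    assume "\<theta> \<in> \<rat>"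
    then have "1 / (1 + \<theta>) \<in> \<rat>" by (intro Rats_divide Rats_add Rats_1)
    moreover have "1 / (1 + \<theta>) = (I 2 - I 1) / (I 3 - I 1)"
      using a0 b0 by (simp add: \<theta>_def a_def b_def field_simps)
    ultimately show False using assms(4) by simp
  qed
  have dense_pts: "f (frac (real n * \<theta>) * a) = f 0" for n
  proof -
    have "f (real n * b) = f 0" using rn r1 by simp
    moreover have "f (real n * b) = f (frac (real n * b / a) * a)"
      using red[of "real n * b"] b0 by simp
    ultimately show ?thesis by (simp add: \<theta>_def)
  qed
  have const01: "f (s * a) = f 0" if s: "s \<in> {0..1}" for s
  proof (rule ccontr)
    assume ne: "f (s * a) \<noteq> f 0"
    define e where "e = dist (f 0) (f (s * a))"
    have e0: "e > 0" using ne by (simp add: e_def)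
    have "continuous_on {0..1} (\<lambda>u. f (u * a))"
      by (rule continuous_on_compose2[OF fc]) (use a0 in \<open>auto intro!: continuous_intros\<close>)
    then obtain d where d: "d > 0" "\<forall>x'\<in>{0..1}. dist x' s < d \<longrightarrow> dist (f (x' * a)) (f (s * a)) < e"
      using s e0 unfolding continuous_on_iff by blast
    obtain k where k: "k > 0" "\<bar>frac (real k * \<theta>) - s\<bar> < d"
      using Kronecker_approx_1_explicit[OF th, of s d] s d(1) by auto
    have "frac (real k * \<theta>) \<in> {0..1}" by (auto simp: frac_ge_0 less_imp_le[OF frac_lt_1])
    then have "dist (f (frac (real k * \<theta>) * a)) (f (s * a)) < e"
      using d k by (auto simp: dist_real_def)
    then show False using dense_pts[of k] by (simp add: e_def)
  qed
  define C where "C = \<rho> 0"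
  have C0: "C > 0" using assms(6) by (simp add: C_def)
  have rho_exp: "\<rho> t = C * exp (- lam * t)" if "t \<ge> 0" for t
  proof -
    have "f t = f (frac (t/a) * a)" using red[OF that] .
    also have "\<dots> = f 0" using const01[of "frac (t/a)"] by (auto simp: frac_ge_0 less_imp_le[OF frac_lt_1])
    finally have "\<rho> t * exp (lam * t) = C" by (simp add: f_def C_def)
    then show ?thesis by (simp add: field_simps exp_minus)
  qed
  have int1: "(\<rho> has_integral 1) {0..}" using assms(7) by (simp add: prob_density_Rplus_def)
  have lam0: "lam > 0"
  proof (rule ccontr)
    assume "\<not> lam > 0"
    then have ge: "\<rho> t \<ge> C" if "t \<ge> 0" for t
      using rho_exp[OF that] that C0 by (simp add: mult_nonpos_nonneg)
    obtain n :: nat where n: "1 / C < real n" using reals_Archimedean2 by blast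
    have i1: "\<rho> integrable_on {0..real n}"
      by (rule integrable_continuous_interval, rule continuous_on_subset[OF cr]) auto
    have "integral {0..real n} (\<lambda>_. C) \<le> integral {0..real n} \<rho>"
      by (rule integral_le) (use i1 ge in auto)
    also have "\<dots> \<le> integral {0..} \<rho>"
      by (rule integral_subset_le) (use i1 int1 assms(6) in \<open>auto simp: less_imp_le\<close>)
    also have "\<dots> = 1" using int1 by (simp add: integral_unique)
    finally have "real n * C \<le> 1" by simp
    then show False using n C0 by (simp add: field_simps)
  qed
  have "((\<lambda>x. C * exp (- lam * x)) has_integral C * (exp (- lam * 0) / lam)) {0..}"
    by (rule has_integral_mult_right[OF has_integral_exp_minus_to_infinity[OF lam0]])
  then have "(\<rho> has_integral C / lam) {0..}"
    using has_integral_cong[of "{0..}" \<rho> "\<lambda>x. C * exp (- lam * x)"] rho_exp by simp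
  then have "C / lam = 1" using int1 has_integral_unique by blast
  then have "C = lam" using lam0 by (simp add: field_simps)
  then show ?thesis using lam0 rho_exp by auto
qed

end
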